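(* Let $D>0$, let $M,L,p\in\mathbb{N}$ with $L\geq 1$, $M\geq 1$ and $p\geq 2$, and let $X=[0,D]^M$ with the Euclidean distance $d$. Endow $X^p$ with the maximum metric $d_{\max}((x_1,\dots,x_p),(y_1,\dots,y_p))=\max_{1\le j\le p} d(x_j,y_j)$. Let $f_1,\dots,f_L:X^p\to X$ be contractions, i.e. Lipschitz maps with respect to $d_{\max}$ and $d$ with Lipschitz constants $\mathrm{lip}(f_i)<1$, and put $C=\max\{\mathrm{lip}(f_1),\dots,\mathrm{lip}(f_L)\}<1$. Let $A_{\mathcal{F}}$ be the unique nonempty compact set $A\subseteq X$ satisfying $A=\bigcup_{i=1}^{L} f_i(A\times\cdots\times A)$ ($p$ factors). Let $(n_k)_{k\ge 1}$ be a sequence of positive integers and put $\varepsilon_k=\frac{D\sqrt{M}}{n_k}$. Let $K_0\subseteq X$ be a nonempty finite set, put $\tilde A_0=K_0$ and, for $k\ge 1$, $$\tilde A_k=\Big\{\tfrac{D}{n_k}\Big[\tfrac{n_k}{D}f_l(u_1,\dots,u_p)\Big] \;\Big|\; u_1,\dots,u_p\in\tilde A_{k-1},\ l\in\{1,\dots,L\}\Big\},$$ where for $x=(x_1,\dots,x_M)\in\mathbb{R}^M$ we write $[x]=([x_1],\dots,[x_M])$, with $[t]$ the greatest integer $\le t$. Then for every $k\in\mathbb{N}$, $k\ge 1$, $$h(\tilde A_k,A_{\mathcal{F}})\le \varepsilon_k+C\varepsilon_{k-1}+C^2\varepsilon_{k-2}+\cdots+C^{k-1}\varepsilon_1+C^k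 D\sqrt{M},$$ where $h$ denotes the Hausdorff–Pompeiu metric on nonempty compact subsets of $X$.
   Context: For nonempty compact $K_1,K_2\subseteq X$, $d(K_1,K_2)=\sup_{x\in K_1}\inf_{y\in K_2}d(x,y)$ and the Hausdorff–Pompeiu distance is $h(K_1,K_2)=\max\{d(K_1,K_2),d(K_2,K_1)\}$. The sets $\tilde A_k$ are the successive outputs of the "grid algorithm": at each step every map $f_l$ is applied to all $p$-tuples of points from the previous set, and each resulting point is replaced by the lower-left corner of the cell of the grid of mesh $D/n_k$ containing it. *)

theory Defs
  imports "HOL-Analysis.Analysis"
begin

text \<open>The cube X = [0,D]^M, with M = CARD('m).\<close>
definition cube :: "real \<Rightarrow> (real^'m) set" where
  "cube D = {x. \<forall>i. 0 \<le> x $ i \<and> x $ i \<le> D}"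

text \<open>p-tuples are functions from a finite index type 'p (p = CARD('p)).\<close>
definition tuples :: "'a set \<Rightarrow> ('p::finite \<Rightarrow> 'a) set" where
  "tuples A = {u. \<forall>j. u j \<in> A}"

definition dmax :: "('p::finite \<Rightarrow> 'a::metric_space) \<Rightarrow> ('p \<Rightarrow> 'a) \<Rightarrow> real" where
  "dmax u v = Max (range (\<lambda>j. dist (u j) (v j)))"

definition lip :: "('p::finite \<Rightarrow> 'a::metric_space) set \<Rightarrow> (('p \<Rightarrow> 'a) \<Rightarrow> 'a) \<Rightarrow> real" where
  "lip S g = Inf {c. 0 \<le> c \<and> (\<forall>u\<in>S. \<forall>v\<in>S. dist (g u) (g v) \<le> c * dmax u v)}"

definition ddist :: "'a::metric_space set \<Rightarrow> 'a set \<Rightarrow> real" where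
  "ddist K1 K2 = (SUP x\<in>K1. INF y\<in>K2. dist x y)"

definition hpdist :: "'a::metric_space set \<Rightarrow> 'a set \<Rightarrow> real" where
  "hpdist K1 K2 = max (ddist K1 K2) (ddist K2 K1)"

definition grid_round :: "real \<Rightarrow> nat \<Rightarrow> real^'m \<Rightarrow> real^'m" where
  "grid_round D n x = (D / real n) *\<^sub>R (\<chi> i. of_int \<lfloor>(real n / D) * x $ i\<rfloor>)"

primrec grid_alg ::
  "real \<Rightarrow> (nat \<Rightarrow> nat) \<Rightarrow> nat \<Rightarrow> (nat \<Rightarrow> ('p::finite \<Rightarrow> real^'m) \<Rightarrow> real^'m)
    \<Rightarrow> (real^'m) set \<Rightarrow> nat \<Rightarrow> (real^'m) set" where
  "grid_alg D n L f K0 0 = K0"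
| "grid_alg D n L f K0 (Suc k) =
     {grid_round D (n (Suc k)) (f l u) | u l. u \<in> tuples (grid_alg D n L f K0 k) \<and> l \<in> {1..L}}"

end

theory Submission
  imports Defs
begin


lemma norm_bound_cart:
  fixes x :: "real^'m"
  assumes "\<And>i. \<bar>x $ i\<bar> \<le> c"
  shows "norm x \<le> c * sqrt (real CARD('m))"
proof -
  have c0: "0 \<le> c" using assms[of undefined] by linarith
  have "(\<Sum>i\<in>UNIV. (norm (x $ i))\<^sup>2) \<le> (\<Sum>i\<in>(UNIV::'m set). c\<^sup>2)"
    apply (rule sum_mono) using assms by simp (metis abs_ge_zero power2_abs power_mono)
  also have "\<dots> = real CARD('m) * c\<^sup>2" by simp
  finally have "norm x \<le> sqrt (real CARD('m) * c\<^sup>2)"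
    unfolding norm_vec_def L2_set_def by (rule real_sqrt_le_mono)
  also have "\<dots> = c * sqrt (real CARD('m))" using c0 by (simp add: real_sqrt_mult)
  finally show ?thesis .
qed

lemma cube_dist:
  fixes x y :: "real^'m"
  assumes "x \<in> cube D" "y \<in> cube D"
  shows "dist x y \<le> D * sqrt (real CARD('m))"
  unfolding dist_norm
  apply (rule norm_bound_cart)
proof -
  fix i
  have "0 \<le> x $ i" "x $ i \<le> D" "0 \<le> y $ i" "y $ i \<le> D" using assms by (auto simp: cube_def)
  then show "\<bar>(x - y) $ i\<bar> \<le> D" by simp
qed

lemma round_props:
  fixes x :: "real^'m"
  assumes D: "D > 0" and N: "N > 0"
  shows "dist (grid_round D N x) x \<le> D * sqrt (real CARD('m)) / real N"
    and "x \<in> cube D \<Longrightarrow> grid_round D N x \<in> cube D"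
proof -
  have ci: "\<bar>(grid_round D N x - x) $ i\<bar> \<le> D / real N" for i
  proof -
    define t where "t = real N / D * x $ i"
    have xi: "x $ i = D / real N * t" using D N by (simp add: t_def)
    have g: "grid_round D N x $ i = D / real N * of_int \<lfloor>t\<rfloor>"
      by (simp add: grid_round_def t_def)
    have "(grid_round D N x - x) $ i = D / real N * (of_int \<lfloor>t\<rfloor> - t)"
      by (simp only: vector_minus_component g) (subst xi, simp add: right_diff_distrib)
    moreover have "of_int \<lfloor>t\<rfloor> \<le> t" "t < of_int \<lfloor>t\<rfloor> + 1" by linarith+
    moreover have "0 < D / real N" using D N by simp
    moreover have "\<bar>of_int \<lfloor>t\<rfloor> - t\<bar> \<le> 1" using \<open>of_int \<lfloor>t\<rfloor> \<le> t\<close> \<open>t < of_int \<lfloor>t\<rfloor> + 1\<close> by linarith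
    ultimately show ?thesis
      by (metis abs_mult abs_of_pos mult_left_le less_imp_le)
  qed
  show "dist (grid_round D N x) x \<le> D * sqrt (real CARD('m)) / real N"
    unfolding dist_norm using norm_bound_cart[OF ci] by simp
  assume xc: "x \<in> cube D"
  show "grid_round D N x \<in> cube D"
    unfolding cube_def
  proof (intro CollectI allI conjI)
    fix i
    define t where "t = real N / D * x $ i"
    have t0: "0 \<le> t" using xc D N by (auto simp: cube_def t_def)
    have tN: "t \<le> real N" using xc D N by (auto simp: cube_def t_def field_simps)
    have g: "grid_round D N x $ i = D / real N * of_int \<lfloor>t\<rfloor>"
      by (simp add: grid_round_def t_def)
    have f0: "(0::real) \<le> of_int \<lfloor>t\<rfloor>" using t0 by simp
    have fN: "(of_int \<lfloor>t\<rfloor>::real) \<le> real N" using tN by linarith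
    show "0 \<le> grid_round D N x $ i" using g f0 D N by simp
    have "D / real N * of_int \<lfloor>t\<rfloor> \<le> D / real N * real N"
      using fN D N by (intro mult_left_mono) auto
    then show "grid_round D N x $ i \<le> D" using g N by simp
  qed
qed

lemma ddist_le:
  fixes K1 K2 :: "'a::metric_space set"
  assumes "K1 \<noteq> {}" "K2 \<noteq> {}" "\<And>x. x \<in> K1 \<Longrightarrow> \<exists>y\<in>K2. dist x y \<le> r"
  shows "ddist K1 K2 \<le> r"
  unfolding ddist_def
proof (rule cSUP_least[OF assms(1)])
  fix x assume "x \<in> K1"
  then obtain y where y: "y \<in> K2" "dist x y \<le> r" using assms(3) by blast
  have "(INF y\<in>K2. dist x y) \<le> dist x y"
    by (rule cINF_lower[OF _ y(1)]) (auto intro: bdd_belowI[where m=0])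
  then show "(INF y\<in>K2. dist x y) \<le> r" using y by simp
qed

lemma ddist_ge:
  fixes K1 K2 :: "'a::heine_borel set"
  assumes "compact K2" "K2 \<noteq> {}" "x \<in> K1" "\<And>a b. a \<in> K1 \<Longrightarrow> b \<in> K2 \<Longrightarrow> dist a b \<le> B"
  shows "\<exists>y\<in>K2. dist x y \<le> ddist K1 K2"
proof -
  obtain y where y: "y \<in> K2" "infdist x K2 = dist x y"
    using infdist_attains_inf[of K2 x] assms compact_imp_closed by blast
  have inf_eq: "\<And>a. (INF b\<in>K2. dist a b) = infdist a K2" using assms(2) by (simp add: infdist_def)
  have "bdd_above ((\<lambda>a. INF b\<in>K2. dist a b) ` K1)"
  proof (rule bdd_aboveI[where M=B])
    fix t assume "t \<in> (\<lambda>a. INF b\<in>K2. dist a b) ` K1"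
    then obtain a where a: "a \<in> K1" "t = infdist a K2" using inf_eq by auto
    obtain b where "b \<in> K2" using assms(2) by blast
    then show "t \<le> B" using a infdist_le[of b K2 a] assms(4)[of a b] by simp
  qed
  then have "(INF b\<in>K2. dist x b) \<le> ddist K1 K2"
    unfolding ddist_def by (rule cSUP_upper[OF assms(3)])
  then show ?thesis using y inf_eq by metis
qed

lemma lip_bound:
  fixes g :: "('p::finite \<Rightarrow> 'a::metric_space) \<Rightarrow> 'a"
  assumes ex: "\<exists>c. 0 \<le> c \<and> (\<forall>u\<in>S. \<forall>v\<in>S. dist (g u) (g v) \<le> c * dmax u v)"
  shows "0 \<le> lip S g" and "\<And>u v. u \<in> S \<Longrightarrow> v \<in> S \<Longrightarrow> dist (g u) (g v) \<le> lip S g * dmax u v"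
proof -
  let ?S = "{c. 0 \<le> c \<and> (\<forall>u\<in>S. \<forall>v\<in>S. dist (g u) (g v) \<le> c * dmax u v)}"
  have ne: "?S \<noteq> {}" using ex by blast
  show "0 \<le> lip S g" unfolding lip_def by (rule cInf_greatest[OF ne]) auto
  fix u v assume uv: "u \<in> S" "v \<in> S"
  have dm0: "0 \<le> dmax u v"
    unfolding dmax_def by (rule order.trans[OF zero_le_dist[of "u undefined" "v undefined"]])
      (rule Max_ge, auto)
  show "dist (g u) (g v) \<le> lip S g * dmax u v"
  proof (rule ccontr)
    assume H: "\<not> ?thesis"
    show False
    proof (cases "dmax u v = 0")
      case True
      obtain c where "c \<in> ?S" using ne by blast
      then have "dist (g u) (g v) \<le> c * dmax u v" using uv by blast
      then show False using H True by simp
    next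
      case False
      then have pos: "dmax u v > 0" using dm0 by simp
      have "Inf ?S < dist (g u) (g v) / dmax u v"
        using H pos unfolding lip_def by (simp add: field_simps)
      then obtain c where c: "c \<in> ?S" "c < dist (g u) (g v) / dmax u v"
        using cInf_lessD[OF ne] by blast
      then have "dist (g u) (g v) \<le> c * dmax u v" using uv by blast
      moreover have "c * dmax u v < dist (g u) (g v)" using c(2) pos by (simp add: field_simps)
      ultimately show False by simp
    qed
  qed
qed

lemma dmax_le:
  fixes u v :: "'p::finite \<Rightarrow> 'a::metric_space"
  assumes "\<And>j. dist (u j) (v j) \<le> e"
  shows "dmax u v \<le> e"
  unfolding dmax_def using assms by (subst Max_le_iff) auto

lemma dmax_nonneg: "0 \<le> dmax (u::'p::finite \<Rightarrow> 'a::metric_space) v"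
  unfolding dmax_def by (rule order.trans[OF zero_le_dist[of "u undefined" "v undefined"]])
      (rule Max_ge, auto)

lemma finite_tuples: "finite B \<Longrightarrow> finite (tuples B :: ('p::finite \<Rightarrow> 'a) set)"
proof -
  assume "finite B"
  have "(tuples B :: ('p \<Rightarrow> 'a) set) = PiE UNIV (\<lambda>_. B)" by (auto simp: tuples_def PiE_def Pi_def extensional_def)
  then show ?thesis using \<open>finite B\<close> by (auto intro!: finite_PiE)
qed


theorem mainTheorem1:
  fixes D :: real and L :: nat
    and f :: "nat \<Rightarrow> ('p::finite \<Rightarrow> real^'m) \<Rightarrow> real^'m"
    and n :: "nat \<Rightarrow> nat" and K0 :: "(real^'m) set" and A :: "(real^'m) set"
    and C :: real and k :: nat
  assumes D_pos: "D > 0"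
    and L_pos: "L \<ge> 1"
    and p_ge2: "CARD('p) \<ge> 2"
    and f_maps: "\<And>l. l \<in> {1..L} \<Longrightarrow> f l ` tuples (cube D) \<subseteq> cube D"
    and f_lipschitz: "\<And>l. l \<in> {1..L} \<Longrightarrow> \<exists>c. 0 \<le> c \<and>
          (\<forall>u\<in>tuples (cube D). \<forall>v\<in>tuples (cube D). dist (f l u) (f l v) \<le> c * dmax u v)"
    and f_contr: "\<And>l. l \<in> {1..L} \<Longrightarrow> lip (tuples (cube D)) (f l) < 1"
    and C_def: "C = Max ((\<lambda>l. lip (tuples (cube D)) (f l)) ` {1..L})"
    and A_sub: "A \<subseteq> cube D" and A_ne: "A \<noteq> {}" and A_cpt: "compact A"
    and A_fix: "A = (\<Union>l\<in>{1..L}. f l ` tuples A)"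
    and n_pos: "\<And>j. j \<ge> 1 \<Longrightarrow> n j > 0"
    and K0_fin: "finite K0" and K0_ne: "K0 \<noteq> {}" and K0_sub: "K0 \<subseteq> cube D"
    and k_pos: "k \<ge> 1"
  shows "hpdist (grid_alg D n L f K0 k) A
     \<le> (\<Sum>j<k. C ^ j * (D * sqrt (real CARD('m)) / real (n (k - j))))
        + C ^ k * D * sqrt (real CARD('m))"
proof -
  define R where "R = D * sqrt (real CARD('m))"
  have lipC: "lip (tuples (cube D)) (f l) \<le> C" if "l \<in> {1..L}" for l
    unfolding C_def by (rule Max_ge) (use that in auto)
  have lip0: "0 \<le> lip (tuples (cube D)) (f l)" if "l \<in> {1..L}" for l
    using lip_bound(1)[OF f_lipschitz[OF that]] .
  have C0: "0 \<le> C" using lipC[of 1] lip0[of 1] L_pos by auto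
  have tup_sub: "tuples B \<subseteq> tuples (cube D)" if "B \<subseteq> cube D" for B :: "(real^'m) set"
    using that by (auto simp: tuples_def)
  have fbound: "dist (f l u) (f l v) \<le> C * dmax u v"
    if "l \<in> {1..L}" "u \<in> tuples (cube D)" "v \<in> tuples (cube D)" for l u v
  proof -
    have "dist (f l u) (f l v) \<le> lip (tuples (cube D)) (f l) * dmax u v"
      by (rule lip_bound(2)[OF f_lipschitz[OF that(1)] that(2,3)])
    also have "\<dots> \<le> C * dmax u v"
      by (rule mult_right_mono[OF lipC[OF that(1)] dmax_nonneg])
    finally show ?thesis .
  qed
  have cubeB: "\<And>a b :: real^'m. a \<in> cube D \<Longrightarrow> b \<in> cube D \<Longrightarrow> dist a b \<le> R"
    unfolding R_def by (rule cube_dist)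
  have step: "hpdist {grid_round D N (f l u) | u l. u \<in> tuples B \<and> l \<in> {1..L}} A
      \<le> R / real N + C * hpdist B A"
    if B: "B \<subseteq> cube D" "B \<noteq> {}" "finite B" and N: "N > 0" for B and N :: nat
  proof -
    let ?G = "{grid_round D N (f l u) | u l. u \<in> tuples B \<and> l \<in> {1..L}}"
    define e where "e = hpdist B A"
    have rnd: "dist (grid_round D N x) x \<le> R / real N" for x :: "real^'m"
      unfolding R_def by (rule round_props(1)[OF D_pos N])
    obtain b where b: "b \<in> B" using B by blast
    have "grid_round D N (f 1 (\<lambda>_. b)) \<in> ?G" using b L_pos by (auto simp: tuples_def)
    then have Gne: "?G \<noteq> {}" by blast
    have dBA: "ddist B A \<le> e" and dAB: "ddist A B \<le> e" unfolding e_def hpdist_def by auto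
    have side1: "ddist ?G A \<le> R / real N + C * e"
    proof (rule ddist_le[OF Gne A_ne])
      fix x assume "x \<in> ?G"
      then obtain u l where x: "x = grid_round D N (f l u)" and u: "u \<in> tuples B" and l: "l \<in> {1..L}"
        by blast
      have "\<forall>j. \<exists>a. a \<in> A \<and> dist (u j) a \<le> e"
      proof
        fix j
        have "u j \<in> B" using u by (auto simp: tuples_def)
        then obtain a where "a \<in> A" "dist (u j) a \<le> ddist B A"
          using ddist_ge[OF A_cpt A_ne _ cubeB] B A_sub by blast
        then show "\<exists>a. a \<in> A \<and> dist (u j) a \<le> e" using dBA by force
      qed
      then obtain v where v: "\<And>j. v j \<in> A" "\<And>j. dist (u j) (v j) \<le> e" by metis
      have vA: "v \<in> tuples A" using v by (auto simp: tuples_def)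
      have yA: "f l v \<in> A" using A_fix l vA by blast
      have "dist x (f l v) \<le> dist x (f l u) + dist (f l u) (f l v)" by (rule dist_triangle)
      also have "\<dots> \<le> R / real N + C * e"
      proof (rule add_mono)
        show "dist x (f l u) \<le> R / real N" using rnd x by simp
        have "dist (f l u) (f l v) \<le> C * dmax u v"
          using fbound[OF l] tup_sub[OF B(1)] tup_sub[OF A_sub] u vA by blast
        also have "\<dots> \<le> C * e" using dmax_le[OF v(2)] C0 by (rule mult_left_mono)
        finally show "dist (f l u) (f l v) \<le> C * e" .
      qed
      finally show "\<exists>y\<in>A. dist x y \<le> R / real N + C * e" using yA by blast
    qed
    have Bc: "compact B" using B(3) by (rule finite_imp_compact)
    have side2: "ddist A ?G \<le> R / real N + C * e"
    proof (rule ddist_le[OF A_ne Gne])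
      fix y assume "y \<in> A"
      then obtain l v where y: "y = f l v" and v: "v \<in> tuples A" and l: "l \<in> {1..L}"
        using A_fix by blast
      have "\<forall>j. \<exists>a. a \<in> B \<and> dist (v j) a \<le> e"
      proof
        fix j
        have "v j \<in> A" using v by (auto simp: tuples_def)
        then obtain a where "a \<in> B" "dist (v j) a \<le> ddist A B"
          using ddist_ge[OF Bc B(2) _ cubeB] B A_sub by blast
        then show "\<exists>a. a \<in> B \<and> dist (v j) a \<le> e" using dAB by force
      qed
      then obtain u where u: "\<And>j. u j \<in> B" "\<And>j. dist (v j) (u j) \<le> e" by metis
      have uB: "u \<in> tuples B" using u by (auto simp: tuples_def)
      have xG: "grid_round D N (f l u) \<in> ?G" using uB l by blast
      have "dist y (grid_round D N (f l u)) \<le> dist (f l v) (f l u) + dist (f l u) (grid_round D N (f l u))"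
        unfolding y by (rule dist_triangle)
      also have "\<dots> \<le> C * e + R / real N"
      proof (rule add_mono)
        show "dist (f l u) (grid_round D N (f l u)) \<le> R / real N" using rnd by (simp add: dist_commute)
        have "dist (f l v) (f l u) \<le> C * dmax v u"
          using fbound[OF l] tup_sub[OF B(1)] tup_sub[OF A_sub] uB v by blast
        also have "\<dots> \<le> C * e" using dmax_le[OF u(2)] C0 by (rule mult_left_mono)
        finally show "dist (f l v) (f l u) \<le> C * e" .
      qed
      finally show "\<exists>x\<in>?G. dist y x \<le> R / real N + C * e" using xG by (auto simp: add.commute)
    qed
    show ?thesis using side1 side2 unfolding hpdist_def e_def by simp
  qed
  have inv: "grid_alg D n L f K0 j \<subseteq> cube D \<and> grid_alg D n L f K0 j \<noteq> {} \<and> finite (grid_alg D n L f K0 j)" for j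
  proof (induction j)
    case 0
    then show ?case using K0_sub K0_ne K0_fin by simp
  next
    case (Suc j)
    let ?B = "grid_alg D n L f K0 j"
    have N: "n (Suc j) > 0" using n_pos by simp
    obtain b where b: "b \<in> ?B" using Suc by blast
    have "grid_round D (n (Suc j)) (f 1 (\<lambda>_. b)) \<in> grid_alg D n L f K0 (Suc j)"
      using b L_pos by (auto simp: tuples_def)
    moreover have "grid_alg D n L f K0 (Suc j) \<subseteq> cube D"
    proof
      fix x assume "x \<in> grid_alg D n L f K0 (Suc j)"
      then obtain u l where x: "x = grid_round D (n (Suc j)) (f l u)" and u: "u \<in> tuples ?B"
        and l: "l \<in> {1..L}" by auto
      have "f l u \<in> cube D" using f_maps[OF l] u tup_sub[of ?B] Suc by blast
      then show "x \<in> cube D" unfolding x by (rule round_props(2)[OF D_pos N])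
    qed
    moreover have "finite (grid_alg D n L f K0 (Suc j))"
    proof -
      have "grid_alg D n L f K0 (Suc j) = (\<lambda>(u, l). grid_round D (n (Suc j)) (f l u)) ` (tuples ?B \<times> {1..L})"
        by auto blast
      then show ?thesis using finite_tuples[of ?B] Suc by (auto intro!: finite_imageI finite_cartesian_product)
    qed
    ultimately show ?case by blast
  qed
  have main: "hpdist (grid_alg D n L f K0 j) A
     \<le> (\<Sum>i<j. C ^ i * (R / real (n (j - i)))) + C ^ j * R" for j
  proof (induction j)
    case 0
    have "hpdist K0 A \<le> R"
      unfolding hpdist_def
      using K0_sub A_sub A_ne K0_ne cubeB
      by (intro max.boundedI ddist_le) (auto, blast+)
    then show ?case by simp
  next
    case (Suc j)
    let ?B = "grid_alg D n L f K0 j"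
    have N: "n (Suc j) > 0" using n_pos by simp
    have "hpdist (grid_alg D n L f K0 (Suc j)) A \<le> R / real (n (Suc j)) + C * hpdist ?B A"
      using step[of ?B "n (Suc j)"] inv[of j] N by simp
    also have "\<dots> \<le> R / real (n (Suc j)) + C * ((\<Sum>i<j. C ^ i * (R / real (n (j - i)))) + C ^ j * R)"
      using Suc.IH C0 by (intro add_left_mono mult_left_mono) auto
    also have "\<dots> = (\<Sum>i<Suc j. C ^ i * (R / real (n (Suc j - i)))) + C ^ Suc j * R"
      by (subst sum.lessThan_Suc_shift) (simp add: sum_distrib_left algebra_simps del: sum.lessThan_Suc)
    finally show ?case .
  qed
  show ?thesis using main[of k] unfolding R_def by (simp add: mult.assoc)
qed

end
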